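(* Let $\mathbf{D}\in\mathbb{R}^{d\times n}$ be arbitrary, $1\le s\le n$, $\gamma>0$, and $\mathbf{g}\sim N(\mathbf{0},\mathbf{I}_d)$. Then \[ w(\mathbf{D}S_\gamma)\ \le\ \mathbb{E}\min_{\mathbf{z}\in K_{\gamma,s}^*}\big\|(\mathbf{D}^\top\mathbf{g})^*+\mathbf{z}\big\|_2. \]
   Context: $S_\gamma:=\{\mathbf{x}\in\mathbb{R}^n:\|\mathbf{x}\|_2=1,\ \|\mathbf{x}_T\|_1\ge\gamma\|\mathbf{x}_{T^c}\|_1\text{ for some }T\subset[n],|T|\le s\}$, where $\mathbf{x}_T$ agrees with $\mathbf{x}$ on $T$ and is $0$ elsewhere. $\mathbf{D}S_\gamma=\{\mathbf{D}\mathbf{x}:\mathbf{x}\in S_\gamma\}$ and $w(T)=\mathbb{E}\sup_{\mathbf{x}\in T}\langle\mathbf{g},\mathbf{x}\rangle$ is the Gaussian width. $K_{\gamma,s}:=\{\mathbf{u}\in\mathbb{R}^n: u_\ell\ge0\ \forall\ell,\ \sum_{\ell=1}^s u_\ell\ge\gamma\sum_{\ell=s+1}^n u_\ell\}$ and $K_{\gamma,s}^*:=\{\mathbf{z}\in\mathbb{R}^n:\langle\mathbf{z},\mathbf{u}\rangle\ge0\ \forall\mathbf{u}\in K_{\gamma,s}\}$ is its dual cone. For $\mathbf{x}\in\mathbb{R}^n$, the nonincreasing rearrangement $\mathbf{x}^*$ satisfies $x_1^*\ge\dots\ge x_n^*\ge0$ with $x_i^*=|x_{\pi(i)}|$ for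 some permutation $\pi$. *)

theory Defs
  imports "HOL-Probability.Probability"
begin

text \<open>Vectors in R^m are represented as functions nat => real, with the
  coordinates indexed by {..<m} (0-based) and required to vanish outside.\<close>

definition std_gaussian :: "nat \<Rightarrow> (nat \<Rightarrow> real) measure" where
  "std_gaussian d = PiM {..<d} (\<lambda>_. density lborel std_normal_density)"

definition inner_n :: "nat \<Rightarrow> (nat \<Rightarrow> real) \<Rightarrow> (nat \<Rightarrow> real) \<Rightarrow> real" where
  "inner_n m x y = (\<Sum>i<m. x i * y i)"

definition norm2_n :: "nat \<Rightarrow> (nat \<Rightarrow> real) \<Rightarrow> real" where
  "norm2_n m x = sqrt (\<Sum>i<m. (x i)\<^sup>2)"

definition gauss_width :: "nat \<Rightarrow> (nat \<Rightarrow> real) set \<Rightarrow> real" where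
  "gauss_width d T = (\<integral>g. (SUP x\<in>T. inner_n d g x) \<partial>std_gaussian d)"

definition matvec :: "nat \<Rightarrow> nat \<Rightarrow> (nat \<Rightarrow> nat \<Rightarrow> real) \<Rightarrow> (nat \<Rightarrow> real) \<Rightarrow> (nat \<Rightarrow> real)" where
  "matvec d n D x = (\<lambda>i. if i < d then (\<Sum>j<n. D i j * x j) else 0)"

definition matTvec :: "nat \<Rightarrow> nat \<Rightarrow> (nat \<Rightarrow> nat \<Rightarrow> real) \<Rightarrow> (nat \<Rightarrow> real) \<Rightarrow> (nat \<Rightarrow> real)" where
  "matTvec d n D g = (\<lambda>j. if j < n then (\<Sum>i<d. D i j * g i) else 0)"

definition S_gamma :: "nat \<Rightarrow> nat \<Rightarrow> real \<Rightarrow> (nat \<Rightarrow> real) set" where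
  "S_gamma n s \<gamma> = {x. (\<forall>i\<ge>n. x i = 0) \<and> norm2_n n x = 1 \<and>
      (\<exists>T \<subseteq> {..<n}. card T \<le> s \<and>
          (\<Sum>i\<in>T. \<bar>x i\<bar>) \<ge> \<gamma> * (\<Sum>i\<in>{..<n} - T. \<bar>x i\<bar>))}"

text \<open>K_{gamma,s} (0-based: the first s coordinates are indices 0..s-1).\<close>
definition K_cone :: "nat \<Rightarrow> nat \<Rightarrow> real \<Rightarrow> (nat \<Rightarrow> real) set" where
  "K_cone n s \<gamma> = {u. (\<forall>i\<ge>n. u i = 0) \<and> (\<forall>l<n. u l \<ge> 0) \<and>
      (\<Sum>l<s. u l) \<ge> \<gamma> * (\<Sum>l\<in>{s..<n}. u l)}"

definition dual_cone :: "nat \<Rightarrow> (nat \<Rightarrow> real) set \<Rightarrow> (nat \<Rightarrow> real) set" where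
  "dual_cone n K = {z. (\<forall>i\<ge>n. z i = 0) \<and> (\<forall>u\<in>K. inner_n n z u \<ge> 0)}"

definition rearr :: "nat \<Rightarrow> (nat \<Rightarrow> real) \<Rightarrow> (nat \<Rightarrow> real)" where
  "rearr n x = (\<lambda>i. if i < n then rev (sort (map (\<lambda>j. \<bar>x j\<bar>) [0..<n])) ! i else 0)"

end

theory Submission
  imports Defs "HOL-Combinatorics.Permutations"
begin


lemma rearr_perm:
  obtains p where "p permutes {..<n}" "\<forall>i<n. rearr n y i = \<bar>y (p i)\<bar>"
proof -
  define xs where "xs = map (\<lambda>j. \<bar>y j\<bar>) [0..<n]"
  have "mset (rev (sort xs)) = mset xs" by simp
  then obtain p where p: "p permutes {..<length xs}" "permute_list p xs = rev (sort xs)"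
    by (rule mset_eq_permutation)
  have len: "length xs = n" by (simp add: xs_def)
  have "\<forall>i<n. rearr n y i = \<bar>y (p i)\<bar>"
  proof (intro allI impI)
    fix i assume i: "i < n"
    have pi: "p i < n" using p(1) i len permutes_in_image by fastforce
    have "rearr n y i = rev (sort xs) ! i" by (simp add: rearr_def xs_def i)
    also have "\<dots> = permute_list p xs ! i" using p(2) by simp
    also have "\<dots> = xs ! p i" using i len by (simp add: permute_list_def)
    also have "\<dots> = \<bar>y (p i)\<bar>" using pi by (simp add: xs_def)
    finally show "rearr n y i = \<bar>y (p i)\<bar>" .
  qed
  then show ?thesis using that p(1) len by simp
qed

lemma rearr_zero: "i \<ge> n \<Longrightarrow> rearr n y i = 0"
  by (simp add: rearr_def)

lemma rearr_nonneg: "0 \<le> rearr n y i"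
proof (cases "i < n")
  case True
  obtain p where "p permutes {..<n}" "\<forall>i<n. rearr n y i = \<bar>y (p i)\<bar>" by (rule rearr_perm)
  then show ?thesis using True by simp
qed (simp add: rearr_def)

lemma rearr_antimono: assumes "i \<le> j" shows "rearr n y j \<le> rearr n y i"
proof (cases "j < n")
  case False then show ?thesis by (simp add: rearr_zero rearr_nonneg)
next
  case True
  define xs where "xs = map (\<lambda>j. \<bar>y j\<bar>) [0..<n]"
  have len: "length (sort xs) = n" by (simp add: xs_def)
  have "sort xs ! (n - Suc j) \<le> sort xs ! (n - Suc i)"
    by (rule sorted_nth_mono) (use True assms len in auto)
  then show ?thesis using True assms len
    by (simp add: rearr_def xs_def[symmetric] rev_nth)
qed

lemma rearr_sorted_perm:
  assumes p: "p permutes {..<n}"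
    and srt: "\<forall>a b. a < b \<longrightarrow> b < n \<longrightarrow> \<bar>y (p b)\<bar> \<le> \<bar>y (p a)\<bar>"
    and i: "i < n"
  shows "rearr n y i = \<bar>y (p i)\<bar>"
proof -
  define xs where "xs = map (\<lambda>j. \<bar>y j\<bar>) [0..<n]"
  have len: "length xs = n" by (simp add: xs_def)
  define L where "L = permute_list p xs"
  have lenL: "length L = n" by (simp add: L_def len)
  have Lnth: "L ! k = \<bar>y (p k)\<bar>" if "k < n" for k
  proof -
    have "p k < n" using p that permutes_in_image by fastforce
    then show ?thesis using that len by (simp add: L_def permute_list_def xs_def)
  qed
  have "mset (rev L) = mset xs" using p len by (simp add: L_def)
  moreover have "sorted (rev L)"
    unfolding sorted_iff_nth_mono
  proof (intro allI impI)
    fix a b assume ab: "a \<le> b" "b < length (rev L)"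
    then show "rev L ! a \<le> rev L ! b"
      using srt lenL Lnth
      by (cases "a = b") (auto simp: rev_nth)
  qed
  ultimately have "sort xs = rev L" by (rule properties_for_sort)
  then have "rearr n y i = L ! i" using i by (simp add: rearr_def xs_def[symmetric])
  then show ?thesis using Lnth i by simp
qed

lemma topsum_antimono:
  fixes b :: "nat \<Rightarrow> real"
  assumes mono: "\<And>i j. i \<le> j \<Longrightarrow> b j \<le> b i" and fin: "finite T"
  shows "(\<Sum>i\<in>T. b i) \<le> (\<Sum>i<card T. b i)"
proof -
  define m where "m = card T"
  define A where "A = T - {..<m}"
  define B where "B = {..<m} - T"
  have fA: "finite A" "finite B" using fin by (auto simp: A_def B_def)
  have c1: "card T = card (T \<inter> {..<m}) + card A"
    unfolding A_def using fin by (rule card_Int_Diff)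
  have c2: "m = card ({..<m} \<inter> T) + card B"
    unfolding B_def using card_Int_Diff[of "{..<m}" T] by simp
  have cAB: "card A = card B" using c1 c2 m_def by (simp add: Int_commute)
  have "(\<Sum>i\<in>A. b i) \<le> (\<Sum>i\<in>A. b m)"
    by (rule sum_mono) (auto simp: A_def intro: mono)
  also have "\<dots> = (\<Sum>i\<in>B. b m)" using cAB by simp
  also have "\<dots> \<le> (\<Sum>i\<in>B. b i)"
    by (rule sum_mono) (auto simp: B_def intro: mono)
  finally have AB: "(\<Sum>i\<in>A. b i) \<le> (\<Sum>i\<in>B. b i)" .
  have "(\<Sum>i\<in>T. b i) = (\<Sum>i\<in>T \<inter> {..<m}. b i) + (\<Sum>i\<in>A. b i)"
    unfolding A_def using fin by (rule sum.Int_Diff)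
  moreover have "(\<Sum>i<m. b i) = (\<Sum>i\<in>{..<m} \<inter> T. b i) + (\<Sum>i\<in>B. b i)"
    unfolding B_def by (rule sum.Int_Diff) simp
  moreover have "{..<m} \<inter> T = T \<inter> {..<m}" by blast
  ultimately show ?thesis using AB m_def by simp
qed



lemma topsum_rearr:
  assumes "T \<subseteq> {..<n}"
  shows "(\<Sum>j\<in>T. \<bar>y j\<bar>) \<le> (\<Sum>i<card T. rearr n y i)"
proof -
  obtain p where p: "p permutes {..<n}" "\<forall>i<n. rearr n y i = \<bar>y (p i)\<bar>" by (rule rearr_perm)
  have ip: "inv p permutes {..<n}" using p(1) by (rule permutes_inv)
  define T' where "T' = inv p ` T"
  have inj: "inj_on p T'" by (rule inj_on_subset[OF permutes_inj[OF p(1)]]) simp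
  have img: "p ` T' = T" unfolding T'_def image_comp permutes_inv_o(1)[OF p(1)] by simp
  have sub: "T' \<subseteq> {..<n}" unfolding T'_def using assms permutes_in_image[OF ip] by auto
  have cT: "card T' = card T" unfolding T'_def
    by (rule card_image) (rule inj_on_subset[OF permutes_inj[OF ip]], simp)
  have "(\<Sum>j\<in>T. \<bar>y j\<bar>) = (\<Sum>i\<in>T'. \<bar>y (p i)\<bar>)"
    using sum.reindex[OF inj, of "\<lambda>j. \<bar>y j\<bar>"] img by simp
  also have "\<dots> = (\<Sum>i\<in>T'. rearr n y i)" using sub p(2) by (intro sum.cong) auto
  also have "\<dots> \<le> (\<Sum>i<card T'. rearr n y i)"
    by (rule topsum_antimono) (simp_all add: rearr_antimono finite_subset[OF sub])
  finally show ?thesis using cT by simp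
qed

lemma abel_sum:
  fixes a c :: "nat \<Rightarrow> real"
  shows "(\<Sum>i<n. a i * c i) = (\<Sum>k<n. (a k - a (Suc k)) * (\<Sum>i<Suc k. c i)) + a n * (\<Sum>i<n. c i)"
  by (induction n) (simp_all add: algebra_simps)

lemma abel_ineq:
  fixes a c e :: "nat \<Rightarrow> real"
  assumes mono: "\<And>k. a (Suc k) \<le> a k" and an: "0 \<le> a n"
    and part: "\<And>k. k < n \<Longrightarrow> (\<Sum>i<Suc k. c i) \<le> (\<Sum>i<Suc k. e i)"
  shows "(\<Sum>i<n. a i * c i) \<le> (\<Sum>i<n. a i * e i)"
proof -
  have last: "(\<Sum>i<n. c i) \<le> (\<Sum>i<n. e i)" by (cases n) (use part in auto)
  have "(\<Sum>k<n. (a k - a (Suc k)) * (\<Sum>i<Suc k. c i)) \<le> (\<Sum>k<n. (a k - a (Suc k)) * (\<Sum>i<Suc k. e i))"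
    by (intro sum_mono mult_left_mono part) (use mono in auto)
  moreover have "a n * (\<Sum>i<n. c i) \<le> a n * (\<Sum>i<n. e i)" by (intro mult_left_mono last an)
  ultimately show ?thesis unfolding abel_sum[where n=n and a=a and c=c] abel_sum[where n=n and a=a and c=e] by simp
qed

lemma norm2_L2: "norm2_n n x = L2_set x {..<n}"
  by (simp add: norm2_n_def L2_set_def)

lemma pointwise:
  assumes x: "x \<in> S_gamma n s \<gamma>" and z: "z \<in> dual_cone n (K_cone n s \<gamma>)"
    and sn: "s \<le> n" and gam: "\<gamma> \<ge> 0"
  shows "inner_n d g (matvec d n D x) \<le> norm2_n n (\<lambda>i. rearr n (matTvec d n D g) i + z i)"
proof -
  define v where "v = matTvec d n D g"
  define r where "r = rearr n v"
  define u where "u = rearr n x"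
  obtain p where p: "p permutes {..<n}" "\<forall>i<n. r i = \<bar>v (p i)\<bar>"
    unfolding r_def by (rule rearr_perm)
  obtain q where q: "q permutes {..<n}" "\<forall>i<n. u i = \<bar>x (q i)\<bar>"
    unfolding u_def by (rule rearr_perm)
  have x0: "\<forall>i\<ge>n. x i = 0" and xn: "norm2_n n x = 1"
    and xT: "\<exists>T \<subseteq> {..<n}. card T \<le> s \<and> (\<Sum>i\<in>T. \<bar>x i\<bar>) \<ge> \<gamma> * (\<Sum>i\<in>{..<n} - T. \<bar>x i\<bar>)"
    using x by (auto simp: S_gamma_def)
  have "inner_n d g (matvec d n D x) = (\<Sum>i<d. \<Sum>j<n. g i * D i j * x j)"
    by (simp add: inner_n_def matvec_def sum_distrib_left mult.assoc)
  also have "\<dots> = (\<Sum>j<n. \<Sum>i<d. g i * D i j * x j)" by (rule sum.swap)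
  also have "\<dots> = (\<Sum>j<n. v j * x j)"
    by (simp add: v_def matTvec_def sum_distrib_left mult_ac)
  also have "\<dots> \<le> (\<Sum>j<n. \<bar>v j\<bar> * \<bar>x j\<bar>)"
    by (intro sum_mono) (simp only: abs_mult[symmetric] abs_ge_self)
  also have "\<dots> = (\<Sum>i<n. \<bar>v (p i)\<bar> * \<bar>x (p i)\<bar>)"
    using sum.permute[OF p(1), of "\<lambda>j. \<bar>v j\<bar> * \<bar>x j\<bar>"] by simp
  also have "\<dots> = (\<Sum>i<n. r i * \<bar>x (p i)\<bar>)" using p(2) by simp
  also have "\<dots> \<le> (\<Sum>i<n. r i * u i)"
  proof (rule abel_ineq)
    show "r (Suc k) \<le> r k" for k unfolding r_def by (rule rearr_antimono) simp
    show "0 \<le> r n" unfolding r_def by (rule rearr_nonneg)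
    fix k assume k: "k < n"
    have inj: "inj_on p {..<Suc k}" by (rule inj_on_subset[OF permutes_inj[OF p(1)]]) simp
    have sub: "p ` {..<Suc k} \<subseteq> {..<n}"
    proof (rule image_subsetI)
      fix i assume "i \<in> {..<Suc k}"
      then have "i < n" using k by simp
      then show "p i \<in> {..<n}" using permutes_in_image[OF p(1), of i] by simp
    qed
    have ck: "card (p ` {..<Suc k}) = Suc k" using card_image[OF inj] by simp
    have "(\<Sum>i<Suc k. \<bar>x (p i)\<bar>) = (\<Sum>j\<in>p ` {..<Suc k}. \<bar>x j\<bar>)"
      using sum.reindex[OF inj, of "\<lambda>j. \<bar>x j\<bar>"] by simp
    also have "\<dots> \<le> (\<Sum>i<card (p ` {..<Suc k}). u i)"
      unfolding u_def by (rule topsum_rearr[OF sub])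
    also have "\<dots> = (\<Sum>i<Suc k. u i)" by (simp only: ck)
    finally show "(\<Sum>i<Suc k. \<bar>x (p i)\<bar>) \<le> (\<Sum>i<Suc k. u i)" .
  qed
  also have "\<dots> \<le> (\<Sum>i<n. (r i + z i) * u i)"
  proof -
    have uK: "u \<in> K_cone n s \<gamma>"
    proof -
      obtain T where T: "T \<subseteq> {..<n}" "card T \<le> s"
        "(\<Sum>i\<in>T. \<bar>x i\<bar>) \<ge> \<gamma> * (\<Sum>i\<in>{..<n} - T. \<bar>x i\<bar>)" using xT by blast
      have unn: "0 \<le> u i" for i unfolding u_def by (rule rearr_nonneg)
      have "(\<Sum>i\<in>T. \<bar>x i\<bar>) \<le> (\<Sum>i<card T. u i)" unfolding u_def by (rule topsum_rearr[OF T(1)])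
      also have "\<dots> \<le> (\<Sum>i<s. u i)" by (rule sum_mono2) (use T(2) unn in auto)
      finally have A: "(\<Sum>i\<in>T. \<bar>x i\<bar>) \<le> (\<Sum>i<s. u i)" .
      have tot: "(\<Sum>i<n. u i) = (\<Sum>j<n. \<bar>x j\<bar>)"
        using sum.permute[OF q(1), of "\<lambda>j. \<bar>x j\<bar>"] q(2) by simp
      have spl1: "(\<Sum>i<n. u i) = (\<Sum>i<s. u i) + (\<Sum>i\<in>{s..<n}. u i)"
      proof -
        have "{..<n} = {..<s} \<union> {s..<n}" using sn by auto
        then have "(\<Sum>i<n. u i) = (\<Sum>i\<in>{..<s} \<union> {s..<n}. u i)" by simp
        also have "\<dots> = (\<Sum>i<s. u i) + (\<Sum>i\<in>{s..<n}. u i)" by (rule sum.union_disjoint) auto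
        finally show ?thesis .
      qed
      have spl2: "(\<Sum>j<n. \<bar>x j\<bar>) = (\<Sum>i\<in>T. \<bar>x i\<bar>) + (\<Sum>i\<in>{..<n} - T. \<bar>x i\<bar>)"
        using sum.subset_diff[OF T(1), of "\<lambda>j. \<bar>x j\<bar>"] by simp
      have "(\<Sum>i\<in>{s..<n}. u i) \<le> (\<Sum>i\<in>{..<n} - T. \<bar>x i\<bar>)" using A tot spl1 spl2 by linarith
      then have "\<gamma> * (\<Sum>i\<in>{s..<n}. u i) \<le> \<gamma> * (\<Sum>i\<in>{..<n} - T. \<bar>x i\<bar>)"
        by (rule mult_left_mono) (rule gam)
      then have "\<gamma> * (\<Sum>i\<in>{s..<n}. u i) \<le> (\<Sum>i<s. u i)" using A T(3) by linarith
      then show ?thesis using unn by (simp add: K_cone_def u_def rearr_zero)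
    qed
    then have "0 \<le> inner_n n z u" using z by (simp add: dual_cone_def)
    then show ?thesis by (simp add: inner_n_def algebra_simps sum.distrib)
  qed
  also have "\<dots> \<le> (\<Sum>i<n. \<bar>r i + z i\<bar> * \<bar>u i\<bar>)"
    by (intro sum_mono) (simp only: abs_mult[symmetric] abs_ge_self)
  also have "\<dots> \<le> L2_set (\<lambda>i. r i + z i) {..<n} * L2_set u {..<n}"
    by (rule L2_set_mult_ineq)
  also have "L2_set u {..<n} = 1"
  proof -
    have "(\<Sum>i<n. (u i)\<^sup>2) = (\<Sum>j<n. (x j)\<^sup>2)"
      using sum.permute[OF q(1), of "\<lambda>j. (x j)\<^sup>2"] q(2) by simp
    then show ?thesis using xn by (simp add: L2_set_def norm2_n_def)
  qed
  finally show ?thesis by (simp add: norm2_L2 r_def v_def)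
qed



lemma rearr_measurable:
  assumes Y: "\<And>j. (\<lambda>\<omega>. Y \<omega> j) \<in> borel_measurable M"
  shows "(\<lambda>\<omega>. rearr n (Y \<omega>) i) \<in> borel_measurable M"
proof (cases "i < n")
  case False then show ?thesis by (simp add: rearr_zero)
next
  case True
  define P where "P = {p. p permutes {..<n}}"
  define C where "C = (\<lambda>p y. \<forall>a b. a < b \<longrightarrow> b < n \<longrightarrow> \<bar>(y::nat\<Rightarrow>real) (p b)\<bar> \<le> \<bar>y (p a)\<bar>)"
  define f where "f = (\<lambda>p \<omega>. if C p (Y \<omega>) then \<bar>Y \<omega> (p i)\<bar> else 0)"
  have finP: "finite P" unfolding P_def by (rule finite_permutations) simp
  have eq: "rearr n (Y \<omega>) i = Max ((\<lambda>p. f p \<omega>) ` P)" for \<omega>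
  proof -
    obtain p where p: "p permutes {..<n}" "\<forall>i<n. rearr n (Y \<omega>) i = \<bar>Y \<omega> (p i)\<bar>" by (rule rearr_perm)
    have Cp: "C p (Y \<omega>)" unfolding C_def
    proof (intro allI impI)
      fix a b :: nat assume "a < b" "b < n"
      then show "\<bar>Y \<omega> (p b)\<bar> \<le> \<bar>Y \<omega> (p a)\<bar>"
        using p(2) rearr_antimono[of a b n "Y \<omega>"] by simp
    qed
    show ?thesis
    proof (rule Max_eqI[symmetric])
      show "finite ((\<lambda>p. f p \<omega>) ` P)" using finP by simp
      show "rearr n (Y \<omega>) i \<in> (\<lambda>p. f p \<omega>) ` P"
      proof (rule image_eqI[of _ _ p])
        show "rearr n (Y \<omega>) i = f p \<omega>" using p(2) Cp True by (simp add: f_def)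
        show "p \<in> P" using p(1) by (simp add: P_def)
      qed
      fix t assume "t \<in> (\<lambda>p. f p \<omega>) ` P"
      then obtain p' where p': "p' \<in> P" "t = f p' \<omega>" by blast
      have p'P: "p' permutes {..<n}" using p'(1) by (simp add: P_def)
      show "t \<le> rearr n (Y \<omega>) i"
      proof (cases "C p' (Y \<omega>)")
        case True
        then have "rearr n (Y \<omega>) i = \<bar>Y \<omega> (p' i)\<bar>"
          using rearr_sorted_perm[OF p'P _ \<open>i < n\<close>] unfolding C_def by blast
        then show ?thesis using p' True by (simp add: f_def)
      next
        case False then show ?thesis using p' by (simp add: f_def rearr_nonneg)
      qed
    qed
  qed
  have [measurable]: "\<And>j. (\<lambda>\<omega>. Y \<omega> j) \<in> borel_measurable M" by (rule Y)
  have fm: "f p \<in> borel_measurable M" for p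
    unfolding f_def C_def by measurable
  show ?thesis unfolding eq
    by (rule borel_measurable_Max[OF finP]) (rule fm)
qed



lemma comp_meas:
  assumes i: "i < d"
  shows "(\<lambda>g. g i) \<in> borel_measurable (std_gaussian d)"
proof -
  have m: "(\<lambda>g. g i) \<in> measurable (std_gaussian d) (density lborel std_normal_density)"
    unfolding std_gaussian_def by (rule measurable_component_singleton) (simp add: i)
  have se: "sets (density lborel std_normal_density) = sets borel" by simp
  show ?thesis using m measurable_cong_sets[OF refl se, of "std_gaussian d"] by simp
qed

lemma v_meas: "(\<lambda>g. matTvec d n D g j) \<in> borel_measurable (std_gaussian d)"
proof (cases "j < n")
  case True
  have "(\<lambda>g. \<Sum>i<d. D i j * g i) \<in> borel_measurable (std_gaussian d)"
    by (intro borel_measurable_sum borel_measurable_times borel_measurable_const comp_meas) simp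
  then show ?thesis using True by (simp add: matTvec_def)
qed (simp add: matTvec_def)

lemma F_meas: "(\<lambda>g. norm2_n n (\<lambda>i. rearr n (matTvec d n D g) i + z i)) \<in> borel_measurable (std_gaussian d)"
proof -
  have [measurable]: "\<And>i. (\<lambda>g. rearr n (matTvec d n D g) i) \<in> borel_measurable (std_gaussian d)"
    by (rule rearr_measurable) (rule v_meas)
  show ?thesis unfolding norm2_n_def by measurable
qed

lemma comp_integrable:
  assumes i: "i < d"
  shows "integrable (std_gaussian d) (\<lambda>g. g i)"
proof -
  let ?N = "density lborel std_normal_density"
  have ps: "prob_space ?N" by (rule prob_space_normal_density) simp
  have dist: "distr (std_gaussian d) ?N (\<lambda>\<omega>. \<omega> i) = ?N"
    unfolding std_gaussian_def by (rule distr_PiM_component) (use ps i in auto)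
  have "integrable lborel (\<lambda>x. std_normal_density x * x ^ 1)" by (rule integrable_std_normal_moment)
  then have "integrable ?N (\<lambda>x. x)" by (subst integrable_density) auto
  then have "integrable (distr (std_gaussian d) ?N (\<lambda>\<omega>. \<omega> i)) (\<lambda>x. x)" using dist by simp
  moreover have "(\<lambda>\<omega>. \<omega> i) \<in> measurable (std_gaussian d) ?N"
    unfolding std_gaussian_def by (rule measurable_component_singleton) (simp add: i)
  ultimately show ?thesis by (subst (asm) integrable_distr_eq) auto
qed


lemma zero_dual: "(\<lambda>_. 0) \<in> dual_cone n K"
  by (simp add: dual_cone_def inner_n_def)

lemma norm2_nonneg: "0 \<le> norm2_n n x"
  by (simp add: norm2_n_def sum_nonneg)

lemma countable_Zq:
  fixes A :: "(nat \<Rightarrow> real) set"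
  shows "countable {w \<in> A. (\<forall>i\<ge>n. w i = 0) \<and> (\<forall>i<n. w i \<in> \<rat>)}"
proof -
  have c: "countable (PiE {..<n} (\<lambda>_. \<rat>))" by (intro countable_PiE) (simp_all add: countable_rat)
  have "{w \<in> A. (\<forall>i\<ge>n. w i = 0) \<and> (\<forall>i<n. w i \<in> \<rat>)}
        \<subseteq> (\<lambda>f i. if i < n then f i else 0) ` (PiE {..<n} (\<lambda>_. \<rat>))"
  proof
    fix w assume w: "w \<in> {w \<in> A. (\<forall>i\<ge>n. w i = 0) \<and> (\<forall>i<n. w i \<in> \<rat>)}"
    show "w \<in> (\<lambda>f i. if i < n then f i else 0) ` (PiE {..<n} (\<lambda>_. \<rat>))"
    proof (rule image_eqI[of _ _ "restrict w {..<n}"])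
      show "w = (\<lambda>i. if i < n then restrict w {..<n} i else 0)"
      proof (rule ext)
        fix i show "w i = (if i < n then restrict w {..<n} i else 0)" using w by simp
      qed
      show "restrict w {..<n} \<in> PiE {..<n} (\<lambda>_. \<rat>)" using w by (simp add: PiE_iff)
    qed
  qed
  then show ?thesis by (rule countable_subset) (rule countable_image[OF c])
qed

lemma approx_dual:
  assumes z: "z \<in> dual_cone n (K_cone n s \<gamma>)" and e: "0 < e"
  obtains w where "w \<in> dual_cone n (K_cone n s \<gamma>)" "\<forall>i<n. w i \<in> \<rat>"
    "norm2_n n (\<lambda>i. a i + w i) \<le> norm2_n n (\<lambda>i. a i + z i) + e"
proof -
  define \<delta> where "\<delta> = e / (real n + 1)"
  have \<delta>: "0 < \<delta>" using e by (simp add: \<delta>_def)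
  define w where "w = (\<lambda>i. if i < n then (SOME q. q \<in> \<rat> \<and> z i < q \<and> q < z i + \<delta>) else 0)"
  have wq: "w i \<in> \<rat> \<and> z i < w i \<and> w i < z i + \<delta>" if "i < n" for i
  proof -
    have "\<exists>q. q \<in> \<rat> \<and> z i < q \<and> q < z i + \<delta>" using Rats_dense_in_real[of "z i" "z i + \<delta>"] \<delta> by auto
    then have "(SOME q. q \<in> \<rat> \<and> z i < q \<and> q < z i + \<delta>) \<in> \<rat> \<and> z i < (SOME q. q \<in> \<rat> \<and> z i < q \<and> q < z i + \<delta>)
       \<and> (SOME q. q \<in> \<rat> \<and> z i < q \<and> q < z i + \<delta>) < z i + \<delta>" by (rule someI_ex)
    then show ?thesis using that unfolding w_def by simp
  qed
  have z0: "\<forall>i\<ge>n. z i = 0" and zK: "\<forall>u\<in>K_cone n s \<gamma>. 0 \<le> inner_n n z u"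
    using z by (auto simp: dual_cone_def)
  have wd: "w \<in> dual_cone n (K_cone n s \<gamma>)"
    unfolding dual_cone_def
  proof (intro CollectI conjI allI impI ballI)
    fix i assume "n \<le> i" then show "w i = 0" by (simp add: w_def)
  next
    fix u assume u: "u \<in> K_cone n s \<gamma>"
    then have un: "\<forall>l<n. 0 \<le> u l" by (simp add: K_cone_def)
    have "0 \<le> inner_n n z u" using zK u by blast
    also have "\<dots> \<le> inner_n n w u" unfolding inner_n_def
    proof (rule sum_mono)
      fix i assume "i \<in> {..<n}"
      then have "i < n" by simp
      then have "z i \<le> w i" "0 \<le> u i" using wq un by (simp_all add: less_imp_le)
      then show "z i * u i \<le> w i * u i" by (rule mult_right_mono)
    qed
    finally show "0 \<le> inner_n n w u" .
  qed
  have "L2_set (\<lambda>i. w i - z i) {..<n} \<le> (\<Sum>i<n. \<bar>w i - z i\<bar>)" by (rule L2_set_le_sum_abs)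
  also have "\<dots> \<le> (\<Sum>i<n. \<delta>)"
  proof (rule sum_mono)
    fix i assume "i \<in> {..<n}"
    then have "i < n" by simp
    then have "z i < w i" "w i < z i + \<delta>" using wq by simp_all
    then show "\<bar>w i - z i\<bar> \<le> \<delta>" by linarith
  qed
  also have "(\<Sum>i<n. \<delta>) = e * (real n / (real n + 1))" by (simp add: \<delta>_def)
  also have "\<dots> \<le> e * 1" by (rule mult_left_mono) (use e in simp_all)
  finally have bnd: "L2_set (\<lambda>i. w i - z i) {..<n} \<le> e" by simp
  have "norm2_n n (\<lambda>i. a i + w i) = L2_set (\<lambda>i. (a i + z i) + (w i - z i)) {..<n}"
    by (simp add: norm2_L2)
  also have "\<dots> \<le> L2_set (\<lambda>i. a i + z i) {..<n} + L2_set (\<lambda>i. w i - z i) {..<n}"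
    by (rule L2_set_triangle_ineq)
  finally have fin: "norm2_n n (\<lambda>i. a i + w i) \<le> norm2_n n (\<lambda>i. a i + z i) + e"
    using bnd by (simp add: norm2_L2)
  have wq': "\<forall>i<n. w i \<in> \<rat>"
  proof (intro allI impI)
    fix i assume "i < n" then show "w i \<in> \<rat>" using wq by simp
  qed
  show ?thesis by (rule that[OF wd wq' fin])
qed



lemma INF_eq:
  "(INF z\<in>dual_cone n (K_cone n s \<gamma>). norm2_n n (\<lambda>i. a i + z i)) =
   (INF z\<in>{w \<in> dual_cone n (K_cone n s \<gamma>). (\<forall>i\<ge>n. w i = 0) \<and> (\<forall>i<n. w i \<in> \<rat>)}. norm2_n n (\<lambda>i. a i + z i))"
proof -
  define Kd where "Kd = dual_cone n (K_cone n s \<gamma>)"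
  define Zq where "Zq = {w \<in> Kd. (\<forall>i\<ge>n. w i = 0) \<and> (\<forall>i<n. w i \<in> \<rat>)}"
  define G where "G = (\<lambda>z. norm2_n n (\<lambda>i. a i + z i))"
  have Z0: "(\<lambda>_. 0) \<in> Zq" using zero_dual[of n "K_cone n s \<gamma>"] by (simp add: Zq_def Kd_def)
  have ZK: "Zq \<subseteq> Kd" unfolding Zq_def by blast
  have bK: "bdd_below (G ` Kd)" by (rule bdd_belowI[of _ 0]) (auto simp: G_def norm2_nonneg)
  have bZ: "bdd_below (G ` Zq)" by (rule bdd_belowI[of _ 0]) (auto simp: G_def norm2_nonneg)
  have "(INF z\<in>Kd. G z) = (INF z\<in>Zq. G z)"
  proof (rule antisym)
    show "(INF z\<in>Kd. G z) \<le> (INF z\<in>Zq. G z)"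
      by (rule cINF_superset_mono[OF _ bK ZK]) (use Z0 in auto)
    show "(INF z\<in>Zq. G z) \<le> (INF z\<in>Kd. G z)"
    proof (rule cINF_greatest)
      show "Kd \<noteq> {}" using Z0 ZK by blast
      fix z assume z: "z \<in> Kd"
      show "(INF z\<in>Zq. G z) \<le> G z"
      proof (rule field_le_epsilon)
        fix e :: real assume e: "0 < e"
        have z': "z \<in> dual_cone n (K_cone n s \<gamma>)" using z by (simp add: Kd_def)
        obtain w where w: "w \<in> dual_cone n (K_cone n s \<gamma>)" "\<forall>i<n. w i \<in> \<rat>"
          "norm2_n n (\<lambda>i. a i + w i) \<le> norm2_n n (\<lambda>i. a i + z i) + e"
          by (rule approx_dual[OF z' e])
        have w0: "\<forall>i\<ge>n. w i = 0" using w(1) by (simp add: dual_cone_def)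
        have wZ: "w \<in> Zq" using w(1,2) w0 by (simp add: Zq_def Kd_def)
        have "(INF z\<in>Zq. G z) \<le> G w" by (rule cINF_lower[OF bZ wZ])
        also have "\<dots> \<le> G z + e" using w(3) by (simp add: G_def)
        finally show "(INF z\<in>Zq. G z) \<le> G z + e" .
      qed
    qed
  qed
  then show ?thesis by (simp add: G_def Zq_def Kd_def)
qed

lemma e0_in_S:
  assumes "1 \<le> s" "s \<le> n" "0 \<le> \<gamma>"
  shows "(\<lambda>i::nat. if i = 0 then (1::real) else 0) \<in> S_gamma n s \<gamma>"
proof -
  define e0 where "e0 = (\<lambda>i::nat. if i = 0 then (1::real) else 0)"
  have n1: "1 \<le> n" using assms by simp
  have a: "\<forall>i\<ge>n. e0 i = 0" using n1 by (simp add: e0_def)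
  have "(\<Sum>i<n. (e0 i)\<^sup>2) = (\<Sum>i<n. if i = 0 then 1 else 0)"
    by (rule sum.cong) (simp_all add: e0_def)
  also have "\<dots> = 1" using n1 by simp
  finally have b: "norm2_n n e0 = 1" by (simp add: norm2_n_def)
  have s0: "(\<Sum>i\<in>{..<n} - {0}. \<bar>e0 i\<bar>) = 0" by (rule sum.neutral) (simp add: e0_def)
  have c: "{0} \<subseteq> {..<n}" "card {0::nat} \<le> s" using n1 assms by auto
  have d: "(\<Sum>i\<in>{0}. \<bar>e0 i\<bar>) \<ge> \<gamma> * (\<Sum>i\<in>{..<n} - {0}. \<bar>e0 i\<bar>)" using s0 by (simp add: e0_def)
  have "e0 \<in> S_gamma n s \<gamma>" unfolding S_gamma_def using a b c d by blast
  then show ?thesis by (simp add: e0_def)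
qed



lemma h_bound:
  "norm2_n n (\<lambda>i. rearr n (matTvec d n D g) i + 0) \<le> (\<Sum>j<n. \<Sum>i<d. \<bar>D i j\<bar> * \<bar>g i\<bar>)"
proof -
  define v where "v = matTvec d n D g"
  obtain p where p: "p permutes {..<n}" "\<forall>i<n. rearr n v i = \<bar>v (p i)\<bar>" by (rule rearr_perm)
  have "norm2_n n (\<lambda>i. rearr n v i + 0) = L2_set (rearr n v) {..<n}" by (simp add: norm2_L2)
  also have "\<dots> \<le> (\<Sum>i<n. \<bar>rearr n v i\<bar>)" by (rule L2_set_le_sum_abs)
  also have "\<dots> = (\<Sum>i<n. \<bar>v (p i)\<bar>)" by (rule sum.cong) (simp_all add: p(2))
  also have "\<dots> = (\<Sum>j<n. \<bar>v j\<bar>)" using sum.permute[OF p(1), of "\<lambda>j. \<bar>v j\<bar>"] by (simp add: comp_def)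
  also have "\<dots> \<le> (\<Sum>j<n. \<Sum>i<d. \<bar>D i j\<bar> * \<bar>g i\<bar>)"
  proof (rule sum_mono)
    fix j assume "j \<in> {..<n}"
    then have "\<bar>v j\<bar> = \<bar>\<Sum>i<d. D i j * g i\<bar>" by (simp add: v_def matTvec_def)
    also have "\<dots> \<le> (\<Sum>i<d. \<bar>D i j * g i\<bar>)" by (rule sum_abs)
    finally show "\<bar>v j\<bar> \<le> (\<Sum>i<d. \<bar>D i j\<bar> * \<bar>g i\<bar>)" by (simp add: abs_mult)
  qed
  finally show ?thesis by (simp add: v_def)
qed

theorem lemma4p5:
  fixes d n s :: nat and \<gamma> :: real and D :: "nat \<Rightarrow> nat \<Rightarrow> real"
  assumes "1 \<le> s" and "s \<le> n" and "\<gamma> > 0"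
  shows "gauss_width d (matvec d n D ` S_gamma n s \<gamma>)
         \<le> (\<integral>g. (INF z\<in>dual_cone n (K_cone n s \<gamma>).
                    norm2_n n (\<lambda>i. rearr n (matTvec d n D g) i + z i)) \<partial>std_gaussian d)"
proof -
  define M where "M = std_gaussian d"
  define Kd where "Kd = dual_cone n (K_cone n s \<gamma>)"
  define Zq where "Zq = {w \<in> Kd. (\<forall>i\<ge>n. w i = 0) \<and> (\<forall>i<n. w i \<in> \<rat>)}"
  define F where "F = (\<lambda>z g. norm2_n n (\<lambda>i. rearr n (matTvec d n D g) i + z i))"
  define h where "h = (\<lambda>g. INF z\<in>Kd. F z g)"
  define f where "f = (\<lambda>g. SUP x\<in>matvec d n D ` S_gamma n s \<gamma>. inner_n d g x)"
  define B where "B = (\<lambda>g. \<Sum>j<n. \<Sum>i<d. \<bar>D i j\<bar> * \<bar>(g::nat\<Rightarrow>real) i\<bar>)"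
  have K0: "(\<lambda>_. 0) \<in> Kd" by (simp add: Kd_def zero_dual)
  have Kne: "Kd \<noteq> {}" using K0 by blast
  have bF: "bdd_below ((\<lambda>z. F z g) ` Kd)" for g
    by (rule bdd_belowI[of _ 0]) (auto simp: F_def norm2_nonneg)
  have hnn: "0 \<le> h g" for g
    unfolding h_def by (rule cINF_greatest[OF Kne]) (simp add: F_def norm2_nonneg)
  have hB: "h g \<le> B g" for g
  proof -
    have "h g \<le> F (\<lambda>_. 0) g" unfolding h_def by (rule cINF_lower[OF bF K0])
    also have "\<dots> \<le> B g" unfolding F_def B_def by (rule h_bound)
    finally show ?thesis .
  qed
  have heq: "h g = (INF z\<in>Zq. F z g)" for g
    unfolding h_def F_def Kd_def Zq_def by (rule INF_eq)
  have hmeas: "h \<in> borel_measurable M"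
  proof -
    have cZ: "countable Zq" unfolding Zq_def by (rule countable_Zq)
    have "(\<lambda>g. INF z\<in>Zq. F z g) \<in> borel_measurable M"
      by (rule borel_measurable_cINF_real[OF cZ]) (simp add: F_def M_def F_meas)
    moreover have "h = (\<lambda>g. INF z\<in>Zq. F z g)" by (rule ext) (rule heq)
    ultimately show ?thesis by simp
  qed
  have intB: "integrable M B"
    unfolding B_def
  proof (intro Bochner_Integration.integrable_sum)
    fix j i assume "i \<in> {..<d}"
    then have "integrable M (\<lambda>g. g i)" unfolding M_def by (intro comp_integrable) simp
    then have "integrable M (\<lambda>g. \<bar>g i\<bar>)" by (rule integrable_abs)
    then show "integrable M (\<lambda>g. \<bar>D i j\<bar> * \<bar>g i\<bar>)" by (rule integrable_mult_right)
  qed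
  have inth: "integrable M h"
  proof (rule Bochner_Integration.integrable_bound[OF intB hmeas])
    show "AE x in M. norm (h x) \<le> norm (B x)"
      using hnn hB by (intro AE_I2) (metis abs_ge_self abs_of_nonneg order_trans real_norm_def)
  qed
  have Sne: "S_gamma n s \<gamma> \<noteq> {}" using e0_in_S[of s n \<gamma>] assms by auto
  have fh: "f g \<le> h g" for g
    unfolding f_def
  proof (rule cSUP_least)
    show "matvec d n D ` S_gamma n s \<gamma> \<noteq> {}" using Sne by blast
    fix y assume "y \<in> matvec d n D ` S_gamma n s \<gamma>"
    then obtain x where x: "x \<in> S_gamma n s \<gamma>" "y = matvec d n D x" by blast
    show "inner_n d g y \<le> h g" unfolding h_def
    proof (rule cINF_greatest[OF Kne])
      fix z assume "z \<in> Kd"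
      then have z: "z \<in> dual_cone n (K_cone n s \<gamma>)" by (simp add: Kd_def)
      show "inner_n d g y \<le> F z g"
        unfolding F_def x(2) by (rule pointwise[OF x(1) z assms(2)]) (use assms(3) in simp)
    qed
  qed
  have L: "gauss_width d (matvec d n D ` S_gamma n s \<gamma>) = integral\<^sup>L M f"
    by (simp add: gauss_width_def f_def M_def)
  have R: "(\<integral>g. (INF z\<in>dual_cone n (K_cone n s \<gamma>).
                    norm2_n n (\<lambda>i. rearr n (matTvec d n D g) i + z i)) \<partial>std_gaussian d) = integral\<^sup>L M h"
    by (simp add: h_def F_def Kd_def M_def)
  show ?thesis
  proof (cases "integrable M f")
    case True
    have "integral\<^sup>L M f \<le> integral\<^sup>L M h" by (rule Bochner_Integration.integral_mono[OF True inth fh])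
    then show ?thesis using L R by simp
  next
    case False
    then have "integral\<^sup>L M f = 0" by (rule not_integrable_integral_eq)
    moreover have "0 \<le> integral\<^sup>L M h" by (rule Bochner_Integration.integral_nonneg) (rule hnn)
    ultimately show ?thesis using L R by simp
  qed
qed

end
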